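(* Let $R_1,\dots,R_k$ be norms on $\mathbb{R}^p$, $\theta_1^*,\dots,\theta_k^*\in\mathbb{R}^p$, and $\mathcal{C}_i=\operatorname{cone}\{\Delta\in\mathbb{R}^p: R_i(\theta_i^*+\Delta)\le R_i(\theta_i^* )\}$. For $i=1,\dots,k$ define $$\delta_i=\sup\Big\{\langle u,v\rangle:\ u\in(-\mathcal{C}_i)\cap S^{p-1},\ v\in\Big(\sum_{j\ne i}\mathcal{C}_j\Big)\cap S^{p-1}\Big\},$$ and $\delta=\max_i\delta_i$. If $\delta<1$, then there exists $\rho>0$ such that for all $\Delta_i\in\mathcal{C}_i$, $i=1,\dots,k$, $$\Big\|\sum_{i=1}^k\Delta_i\Big\|_2\ \ge\ \rho\sum_{i=1}^k\|\Delta_i\|_2 .$$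
   Context: $\operatorname{cone}(E)$ is the smallest closed cone containing $E$; $S^{p-1}$ is the Euclidean unit sphere in $\mathbb{R}^p$; $\sum_{j\ne i}\mathcal{C}_j$ is the Minkowski sum of the cones. *)

theory Defs
  imports "HOL-Analysis.Analysis"
begin

definition is_norm :: "('a::real_vector \<Rightarrow> real) \<Rightarrow> bool" where
  "is_norm R \<longleftrightarrow>
     (\<forall>x. 0 \<le> R x) \<and> (\<forall>x. R x = 0 \<longleftrightarrow> x = 0) \<and>
     (\<forall>c x. R (c *\<^sub>R x) = \<bar>c\<bar> * R x) \<and>
     (\<forall>x y. R (x + y) \<le> R x + R y)"

definition closed_cone_hull :: "'a::real_normed_vector set \<Rightarrow> 'a set" where
  "closed_cone_hull E = \<Inter>{C. cone C \<and> closed C \<and> E \<subseteq> C}"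

definition descent_cone :: "('a::real_normed_vector \<Rightarrow> real) \<Rightarrow> 'a \<Rightarrow> 'a set" where
  "descent_cone R \<theta> = closed_cone_hull {\<Delta>. R (\<theta> + \<Delta>) \<le> R \<theta>}"

definition minkowski_sum :: "nat set \<Rightarrow> (nat \<Rightarrow> 'a::real_vector set) \<Rightarrow> 'a set" where
  "minkowski_sum J C = {\<Sum>j\<in>J. d j | d. \<forall>j\<in>J. d j \<in> C j}"

text \<open>delta_i, taken as a supremum in the extended reals (sup of the empty set is -infinity).\<close>
definition delta_i :: "nat \<Rightarrow> (nat \<Rightarrow> 'a::euclidean_space set) \<Rightarrow> nat \<Rightarrow> ereal" where
  "delta_i k C i = Sup {ereal (u \<bullet> v) | u v.
      u \<in> uminus ` (C i) \<inter> sphere 0 1 \<and>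
      v \<in> minkowski_sum ({..<k} - {i}) C \<inter> sphere 0 1}"

definition delta :: "nat \<Rightarrow> (nat \<Rightarrow> 'a::euclidean_space set) \<Rightarrow> ereal" where
  "delta k C = Max (delta_i k C ` {..<k})"

end

theory Submission
  imports Defs
begin

lemma cone_cch: "x \<in> closed_cone_hull E \<Longrightarrow> c \<ge> 0 \<Longrightarrow> c *\<^sub>R x \<in> closed_cone_hull E"
  unfolding closed_cone_hull_def cone_def by blast

lemma key_ineq:
  fixes x w :: "'a::real_inner"
  assumes d0: "0 \<le> d" and d1: "d < 1" and ip: "- (x \<bullet> w) \<le> d * norm x * norm w"
  shows "(1 - d) * (norm x)^2 \<le> (norm (x + w))^2"
proof -
  have "(norm (x + w))^2 = (norm x)^2 + (norm w)^2 + 2 * (x \<bullet> w)"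
    by (simp add: power2_norm_eq_inner inner_add_left inner_add_right inner_commute)
  also have "\<dots> \<ge> (norm x)^2 + (norm w)^2 - 2 * d * norm x * norm w" using ip by linarith
  moreover have "(norm x)^2 + (norm w)^2 - 2 * d * norm x * norm w
     = (1-d)*(norm x)^2 + d * (norm x - norm w)^2 + (1-d) * (norm w)^2"
    by (simp add: power2_eq_square algebra_simps)
  moreover have "d * (norm x - norm w)^2 \<ge> 0" "(1-d) * (norm w)^2 \<ge> 0" using d0 d1 by auto
  ultimately show ?thesis by linarith
qed

theorem theorem2:
  fixes k :: nat
    and R :: "nat \<Rightarrow> 'a::euclidean_space \<Rightarrow> real"
    and \<theta> :: "nat \<Rightarrow> 'a"
  assumes "k \<ge> 1"
    and "\<forall>i<k. is_norm (R i)"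
    and "delta k (\<lambda>i. descent_cone (R i) (\<theta> i)) < 1"
  shows "\<exists>\<rho>>0. \<forall>\<Delta> :: nat \<Rightarrow> 'a.
           (\<forall>i<k. \<Delta> i \<in> descent_cone (R i) (\<theta> i)) \<longrightarrow>
           norm (\<Sum>i<k. \<Delta> i) \<ge> \<rho> * (\<Sum>i<k. norm (\<Delta> i))"
proof -
  define C where "C = (\<lambda>i. descent_cone (R i) (\<theta> i))"
  have Ccone: "c *\<^sub>R x \<in> C i" if "x \<in> C i" "c \<ge> 0" for x c i
    using that cone_cch unfolding C_def descent_cone_def by blast
  obtain d :: real where d0: "0 \<le> d" and d1: "d < 1" and dd: "delta k C \<le> ereal d"
  proof (cases "delta k C = -\<infinity>")
    case True then show ?thesis using that[of 0] by simp
  next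
    case False
    have "delta k C < 1" using assms(3) C_def by simp
    with False obtain r where r: "delta k C = ereal r" "r < 1"
      by (cases "delta k C") auto
    show ?thesis using that[of "max 0 r"] r by auto
  qed
  define c where "c = sqrt (1 - d)"
  have c0: "c > 0" using d1 c_def by simp
  have main: "c * norm (\<Delta> i) \<le> norm (\<Sum>i<k. \<Delta> i)"
    if D: "\<forall>i<k. \<Delta> i \<in> C i" and ik: "i < k" for \<Delta> i
  proof -
    define w where "w = (\<Sum>j\<in>{..<k} - {i}. \<Delta> j)"
    have s: "(\<Sum>i<k. \<Delta> i) = \<Delta> i + w"
      unfolding w_def using ik by (simp add: sum.remove)
    have ip: "- (\<Delta> i \<bullet> w) \<le> d * norm (\<Delta> i) * norm w"
    proof (cases "\<Delta> i = 0 \<or> w = 0")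
      case True then show ?thesis using d0 by auto
    next
      case False
      define u where "u = - ((1 / norm (\<Delta> i)) *\<^sub>R \<Delta> i)"
      define v where "v = (1 / norm w) *\<^sub>R w"
      have u: "u \<in> uminus ` (C i) \<inter> sphere 0 1"
        unfolding u_def using False Ccone[of "\<Delta> i" i "1 / norm (\<Delta> i)"] D ik by auto
      have "v \<in> minkowski_sum ({..<k} - {i}) C"
        unfolding minkowski_sum_def v_def
        apply (rule CollectI, rule exI[of _ "\<lambda>j. (1 / norm w) *\<^sub>R \<Delta> j"])
        using D Ccone by (auto simp: scaleR_sum_right w_def)
      moreover have "norm v = 1" unfolding v_def using False by auto
      ultimately have v: "v \<in> minkowski_sum ({..<k} - {i}) C \<inter> sphere 0 1" by auto
      have "ereal (u \<bullet> v) \<le> delta_i k C i"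
        unfolding delta_i_def using u v by (intro Sup_upper) blast
      also have "\<dots> \<le> delta k C" unfolding delta_def using ik by (intro Max_ge) auto
      also have "\<dots> \<le> ereal d" by (rule dd)
      finally have uv: "u \<bullet> v \<le> d" by simp
      have "- (\<Delta> i \<bullet> w) = norm (\<Delta> i) * norm w * (u \<bullet> v)"
        unfolding u_def v_def using False by (simp add: inner_scaleR_left inner_scaleR_right)
      also have "\<dots> \<le> norm (\<Delta> i) * norm w * d"
        using uv by (intro mult_left_mono) auto
      finally show ?thesis by (simp add: mult_ac)
    qed
    have kk: "(1 - d) * (norm (\<Delta> i))^2 \<le> (norm (\<Delta> i + w))^2"
      by (rule key_ineq[OF d0 d1 ip])
    hence "sqrt ((1 - d) * (norm (\<Delta> i))^2) \<le> norm (\<Delta> i + w)"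
      using real_sqrt_le_mono[OF kk] by simp
    then show ?thesis unfolding c_def s using d1 by (simp add: real_sqrt_mult)
  qed
  show ?thesis
  proof (intro exI[of _ "c / real k"] conjI allI impI)
    show "c / real k > 0" using c0 assms(1) by simp
  next
    fix \<Delta> :: "nat \<Rightarrow> 'a"
    assume "\<forall>i<k. \<Delta> i \<in> descent_cone (R i) (\<theta> i)"
    hence D: "\<forall>i<k. \<Delta> i \<in> C i" unfolding C_def by simp
    have "c * (\<Sum>i<k. norm (\<Delta> i)) = (\<Sum>i<k. c * norm (\<Delta> i))" by (simp add: sum_distrib_left)
    also have "\<dots> \<le> (\<Sum>i<k. norm (\<Sum>i<k. \<Delta> i))" by (intro sum_mono main[OF D]) auto
    also have "\<dots> = real k * norm (\<Sum>i<k. \<Delta> i)" by simp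
    finally have "c * (\<Sum>i<k. norm (\<Delta> i)) \<le> real k * norm (\<Sum>i<k. \<Delta> i)" .
    thus "c / real k * (\<Sum>i<k. norm (\<Delta> i)) \<le> norm (\<Sum>i<k. \<Delta> i)"
      using assms(1) by (simp add: field_simps)
  qed
qed

end
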